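(* Let $k\ge 2$ be an integer, and for each $i=1,\dots,k$ let $K_i$ be either $\mathbb{R}$ or $\mathbb{T}$. Let $K=\prod_{i=1}^k K_i$ and for $i=1,\dots,k$ let $H_i=\{(x_1,\dots,x_k)\in K: x_i=0\}$. If $G$ is a dense subgroup of $K$ such that $G\cap H_i$ is not dense in $H_i$ for every $i=1,\dots,k$, then $G$ is zero-dimensional.
   Context: $\mathbb{T}=\mathbb{R}/\mathbb{Z}$ is the circle group written additively, with its usual compact topology; $K$ carries the product topology and $G$ the subspace topology. A space is zero-dimensional if it has a base of clopen sets. *)

theory Defs
  imports "HOL-Analysis.Analysis"
begin

text \<open>The circle group T = R/Z, represented by the fundamental domain [0,1),
  with addition modulo 1 and the quotient topology of the map frac : R -> [0,1).\<close>

definition circle_open :: "real set \<Rightarrow> bool" where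
  "circle_open U \<longleftrightarrow> U \<subseteq> {0..<1} \<and> open {x::real. frac x \<in> U}"

lemma istopology_circle_open: "istopology circle_open"
  unfolding istopology_def circle_open_def
proof (intro conjI allI impI)
  fix S T :: "real set"
  assume "S \<subseteq> {0..<1} \<and> open {x. frac x \<in> S}" "T \<subseteq> {0..<1} \<and> open {x. frac x \<in> T}"
  then show "S \<inter> T \<subseteq> {0..<1}" by blast
  have "{x. frac x \<in> S \<inter> T} = {x. frac x \<in> S} \<inter> {x. frac x \<in> T}" by blast
  with \<open>S \<subseteq> {0..<1} \<and> open {x. frac x \<in> S}\<close> \<open>T \<subseteq> {0..<1} \<and> open {x. frac x \<in> T}\<close>
  show "open {x. frac x \<in> S \<inter> T}" by auto
next
  fix K :: "real set set"
  assume K: "\<forall>S\<in>K. S \<subseteq> {0..<1} \<and> open {x. frac x \<in> S}"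
  then show "\<Union>K \<subseteq> {0..<1}" by blast
  have "{x. frac x \<in> \<Union>K} = (\<Union>S\<in>K. {x. frac x \<in> S})" by blast
  with K show "open {x. frac x \<in> \<Union>K}" by auto
qed

definition circle_topology :: "real topology" where
  "circle_topology = topology circle_open"

text \<open>The group K = K_1 x ... x K_k, indexed by a finite type 'n with k = CARD('n);
  the coordinates in S are circle coordinates, the others real-line coordinates.\<close>

definition factor_topology :: "'n set \<Rightarrow> 'n \<Rightarrow> real topology" where
  "factor_topology S i = (if i \<in> S then circle_topology else euclideanreal)"

definition K_topology :: "('n::finite) set \<Rightarrow> ('n \<Rightarrow> real) topology" where
  "K_topology S = product_topology (factor_topology S) UNIV"

definition K_add :: "'n set \<Rightarrow> ('n \<Rightarrow> real) \<Rightarrow> ('n \<Rightarrow> real) \<Rightarrow> ('n \<Rightarrow> real)" where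
  "K_add S x y = (\<lambda>i. if i \<in> S then frac (x i + y i) else x i + y i)"

definition K_neg :: "'n set \<Rightarrow> ('n \<Rightarrow> real) \<Rightarrow> ('n \<Rightarrow> real)" where
  "K_neg S x = (\<lambda>i. if i \<in> S then frac (- x i) else - x i)"

definition K_zero :: "'n \<Rightarrow> real" where
  "K_zero = (\<lambda>i. 0)"

definition K_subgroup :: "('n::finite) set \<Rightarrow> ('n \<Rightarrow> real) set \<Rightarrow> bool" where
  "K_subgroup S G \<longleftrightarrow> G \<subseteq> topspace (K_topology S) \<and> K_zero \<in> G
     \<and> (\<forall>x\<in>G. \<forall>y\<in>G. K_add S x y \<in> G) \<and> (\<forall>x\<in>G. K_neg S x \<in> G)"

definition K_hyperplane :: "('n::finite) set \<Rightarrow> 'n \<Rightarrow> ('n \<Rightarrow> real) set" where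
  "K_hyperplane S i = {x \<in> topspace (K_topology S). x i = 0}"

definition dense_in :: "'a topology \<Rightarrow> 'a set \<Rightarrow> bool" where
  "dense_in X A \<longleftrightarrow> A \<subseteq> topspace X \<and> X closure_of A = topspace X"

definition zero_dimensional :: "'a topology \<Rightarrow> bool" where
  "zero_dimensional X \<longleftrightarrow>
     (\<forall>U x. openin X U \<and> x \<in> U \<longrightarrow> (\<exists>V. openin X V \<and> closedin X V \<and> x \<in> V \<and> V \<subseteq> U))"

end

theory Submission
  imports Defs
begin

definition psi :: "'n set \<Rightarrow> 'n \<Rightarrow> real \<Rightarrow> real" where
  "psi S j t = (if j \<in> S then frac t else t)"

lemma openin_circle: "openin circle_topology U \<longleftrightarrow> circle_open U"
  by (simp add: circle_topology_def istopology_circle_open)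

lemma topspace_circle: "topspace circle_topology = {0..<1}"
proof -
  have "circle_open {0..<1}" unfolding circle_open_def by (simp add: frac_lt_1)
  then show ?thesis unfolding topspace_def openin_circle circle_open_def by auto
qed

lemma topspace_factor: "topspace (factor_topology S j) = (if j \<in> S then {0..<1} else UNIV)"
  by (simp add: factor_topology_def topspace_circle)

lemma psi_in_topspace: "psi S j t \<in> topspace (factor_topology S j)"
  by (simp add: topspace_factor psi_def frac_lt_1)

lemma psi_id: "x \<in> topspace (factor_topology S j) \<Longrightarrow> psi S j x = x"
  by (auto simp: topspace_factor psi_def split: if_splits)

lemma open_psi_pre: "openin (factor_topology S j) U \<Longrightarrow> open {t. psi S j t \<in> U}"
  by (auto simp: factor_topology_def psi_def openin_circle circle_open_def split: if_splits)

lemma frac_image_pre: "{x. frac x \<in> frac ` I} = (\<Union>m::int. (\<lambda>y. y + of_int m) ` I)"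
proof (rule set_eqI, rule iffI)
  fix x assume "x \<in> {x. frac x \<in> frac ` I}"
  then obtain y where y: "y \<in> I" "frac x = frac y" by auto
  then obtain n where "x = y + of_int n" by (metis frac_eqE)
  with y show "x \<in> (\<Union>m::int. (\<lambda>y. y + of_int m) ` I)" by auto
next
  fix x assume "x \<in> (\<Union>m::int. (\<lambda>y. y + of_int m) ` I)"
  then show "x \<in> {x. frac x \<in> frac ` I}" by auto
qed

lemma openin_psi_interval: "openin (factor_topology S j) (psi S j ` {a<..<b})"
proof (cases "j \<in> S")
  case True
  have "open ((\<lambda>y. y + of_int m) ` {a<..<b})" for m :: int
    by (simp add: open_translation_subtract[of _ "- of_int m", simplified] add.commute)
  then have "open (\<Union>m::int. (\<lambda>y. y + of_int m) ` {a<..<b})" by blast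
  then show ?thesis using True
    by (auto simp: factor_topology_def psi_def openin_circle circle_open_def frac_image_pre frac_lt_1)
next
  case False
  then show ?thesis by (simp add: factor_topology_def psi_def)
qed

lemma arc_compl:
  fixes a b :: real
  assumes "a \<le> b" "b - a < 1"
  shows "{0..<1} - frac ` {a..b} = frac ` {b<..<a+1}"
proof (rule set_eqI, rule iffI)
  fix y assume y: "y \<in> {0..<1} - frac ` {a..b}"
  define z where "z = y - of_int \<lfloor>y - a\<rfloor>"
  have "frac z = frac y" unfolding z_def using frac_add_of_int_right[of y "- \<lfloor>y - a\<rfloor>"] by simp
  then have fz: "frac z = y" using y by simp
  have z1: "a \<le> z" "z < a + 1" unfolding z_def
    using floor_le_iff[of "y-a"] by (linarith, linarith)
  have "\<not> z \<le> b" using y fz z1 by (metis atLeastAtMost_iff image_eqI DiffE)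
  then show "y \<in> frac ` {b<..<a+1}" using fz z1 by force
next
  fix y assume "y \<in> frac ` {b<..<a+1}"
  then obtain z where z: "b < z" "z < a + 1" "y = frac z" by auto
  have "y \<notin> frac ` {a..b}"
  proof
    assume "y \<in> frac ` {a..b}"
    then obtain w where w: "a \<le> w" "w \<le> b" "frac w = frac z" using z by auto
    then obtain n where n: "z = w + of_int n" by (metis frac_eqE)
    have "(0::real) < of_int n" using n w(2) z(1) by linarith
    moreover have "of_int n < (1::real)" using n w(1) z(2) by simp
    ultimately show False by simp
  qed
  then show "y \<in> {0..<1} - frac ` {a..b}" using z by (simp add: frac_lt_1)
qed

lemma closedin_psi_interval:
  assumes "a \<le> b" "b - a < 1"
  shows "closedin (factor_topology S j) (psi S j ` {a..b})"
proof (cases "j \<in> S")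
  case True
  have "openin (factor_topology S j) (psi S j ` {b<..<a+1})" by (rule openin_psi_interval)
  then have "openin circle_topology ({0..<1} - frac ` {a..b})"
    using True arc_compl[OF assms] by (simp add: factor_topology_def psi_def)
  moreover have "frac ` {a..b} \<subseteq> {0..<1}" by (auto simp: frac_lt_1)
  ultimately show ?thesis using True
    by (simp add: factor_topology_def psi_def closedin_def topspace_circle)
next
  case False
  then show ?thesis by (simp add: factor_topology_def psi_def)
qed

definition Psi :: "'n set \<Rightarrow> ('n \<Rightarrow> real) \<Rightarrow> ('n \<Rightarrow> real)" where
  "Psi S v = (\<lambda>j. psi S j (v j))"

lemma frac_frac_add: "frac (frac a + frac b) = frac (a + b)"
proof -
  have e: "frac a + frac b = (a + b) + of_int (- \<lfloor>a\<rfloor> - \<lfloor>b\<rfloor>)" by (simp add: frac_def)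
  show ?thesis unfolding e by (rule frac_add_of_int_right)
qed

lemma frac_neg_frac': "frac (- frac s) = frac (- s)"
proof -
  have e: "- frac s = - s + of_int \<lfloor>s\<rfloor>" by (simp add: frac_def)
  show ?thesis unfolding e by (rule frac_add_of_int_right)
qed

lemma K_add_Psi: "K_add S (Psi S t) (K_neg S (Psi S s)) = Psi S (t - s)"
proof
  fix j
  show "K_add S (Psi S t) (K_neg S (Psi S s)) j = Psi S (t - s) j"
  proof (cases "j \<in> S")
    case True
    have "frac (frac (t j) + frac (- frac (s j))) = frac (t j - s j)"
    proof -
      have "frac (frac (t j) + frac (- frac (s j))) = frac (t j + - frac (s j))"
        by (rule frac_frac_add)
      also have "t j + - frac (s j) = (t j - s j) + of_int \<lfloor>s j\<rfloor>" by (simp add: frac_def)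
      also have "frac \<dots> = frac (t j - s j)" by (rule frac_add_of_int_right)
      finally show ?thesis .
    qed
    then show ?thesis using True by (simp add: K_add_def K_neg_def Psi_def psi_def)
  next
    case False
    then show ?thesis by (simp add: K_add_def K_neg_def Psi_def psi_def)
  qed
qed

lemma topspace_K: "topspace (K_topology S) = {x. \<forall>j. x j \<in> topspace (factor_topology S j)}"
  by (auto simp: K_topology_def PiE_iff)

lemma Psi_in_topspace: "Psi S v \<in> topspace (K_topology S)"
  by (simp add: topspace_K Psi_def psi_in_topspace)

lemma dense_pick:
  fixes S :: "('n::finite) set"
  assumes "dense_in (K_topology S) G" "\<And>j. lo j < hi j"
  shows "\<exists>s. Psi S s \<in> G \<and> (\<forall>j. lo j < s j \<and> s j < hi j)"
proof -
  define W where "W = PiE UNIV (\<lambda>j. psi S j ` {lo j<..<hi j})"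
  have W: "openin (K_topology S) W" unfolding W_def K_topology_def
    by (simp add: openin_PiE openin_psi_interval)
  define c where "c = (\<lambda>j. (lo j + hi j) / 2)"
  have "Psi S c \<in> W" unfolding W_def Psi_def c_def using assms(2) by (auto simp: PiE_iff)
  moreover have "Psi S c \<in> (K_topology S) closure_of G"
    using assms(1) Psi_in_topspace unfolding dense_in_def by auto
  ultimately obtain g where g: "g \<in> G" "g \<in> W" using W unfolding in_closure_of by blast
  then have "\<forall>j. \<exists>t. lo j < t \<and> t < hi j \<and> g j = psi S j t" unfolding W_def by (force simp: PiE_iff)
  then obtain s where s: "\<And>j. lo j < s j \<and> s j < hi j \<and> g j = psi S j (s j)" by metis
  then have "g = Psi S s" by (auto simp: Psi_def)
  with s g show ?thesis by blast
qed

lemma box_radius: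
  fixes S :: "('n::finite) set"
  assumes "openin (K_topology S) Ob" "z \<in> Ob"
  shows "\<exists>r>0. \<forall>v. (\<forall>j. \<bar>v j - z j\<bar> < r) \<longrightarrow> Psi S v \<in> Ob"
proof -
  obtain N where N: "\<forall>j. openin (factor_topology S j) (N j)" "z \<in> PiE UNIV N" "PiE UNIV N \<subseteq> Ob"
  proof -
    have "\<forall>x \<in> Ob. \<exists>U. finite {i \<in> UNIV. U i \<noteq> topspace (factor_topology S i)} \<and>
                 (\<forall>i \<in> UNIV. openin (factor_topology S i) (U i)) \<and> x \<in> Pi\<^sub>E UNIV U \<and> Pi\<^sub>E UNIV U \<subseteq> Ob"
      using assms(1) unfolding K_topology_def openin_product_topology_alt .
    then obtain U where "(\<forall>i \<in> UNIV. openin (factor_topology S i) (U i)) \<and> z \<in> Pi\<^sub>E UNIV U \<and> Pi\<^sub>E UNIV U \<subseteq> Ob"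
      using assms(2) by meson
    then show ?thesis using that by blast
  qed
  have "\<exists>e>0. \<forall>t. \<bar>t - z j\<bar> < e \<longrightarrow> psi S j t \<in> N j" for j
  proof -
    have op: "open {t. psi S j t \<in> N j}" by (rule open_psi_pre[OF spec[OF N(1)]])
    have zN: "z j \<in> N j" using N(2) by (simp add: PiE_iff)
    have zt: "z j \<in> topspace (factor_topology S j)" using openin_subset[OF spec[OF N(1)]] zN by blast
    have "z j \<in> {t. psi S j t \<in> N j}" using zN psi_id[OF zt] by simp
    then obtain e where "e > 0" "\<forall>t. dist t (z j) < e \<longrightarrow> t \<in> {t. psi S j t \<in> N j}"
      using op unfolding open_dist by blast
    then show ?thesis by (auto simp: dist_real_def)
  qed
  then obtain e where e: "\<And>j. e j > 0" "\<And>j t. \<bar>t - z j\<bar> < e j \<Longrightarrow> psi S j t \<in> N j" by metis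
  define r where "r = Min (range e)"
  have r0: "r > 0" unfolding r_def using e(1) by (simp)
  have rle: "r \<le> e j" for j unfolding r_def by simp
  have "Psi S v \<in> Ob" if "\<forall>j. \<bar>v j - z j\<bar> < r" for v
  proof -
    have "\<And>j. psi S j (v j) \<in> N j"
    proof -
      fix j have "\<bar>v j - z j\<bar> < e j" using that rle[of j] by (meson less_le_trans)
      then show "psi S j (v j) \<in> N j" by (rule e(2))
    qed
    then have "Psi S v \<in> PiE UNIV N" by (simp add: PiE_iff Psi_def)
    then show ?thesis using N(3) by blast
  qed
  then show ?thesis using r0 by blast
qed

lemma hyper_avoid:
  fixes S :: "('n::finite) set"
  assumes sub: "K_subgroup S G"
    and nd: "\<not> dense_in (subtopology (K_topology S) (K_hyperplane S i)) (G \<inter> K_hyperplane S i)"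
  shows "\<exists>z r. z \<in> K_hyperplane S i \<and> r > 0 \<and>
           (\<forall>v. (\<forall>j. \<bar>v j - z j\<bar> < r) \<and> v i = 0 \<longrightarrow> Psi S v \<notin> G)"
proof -
  define X where "X = K_topology S"
  define H where "H = K_hyperplane S i"
  have Hsub: "H \<subseteq> topspace X" by (auto simp: K_hyperplane_def H_def X_def)
  have ts: "topspace (subtopology X H) = H" using Hsub by (simp add: topspace_subtopology Int_absorb1)
  have "G \<inter> H \<subseteq> topspace (subtopology X H)" using ts by blast
  moreover have "\<not> (G \<inter> H \<subseteq> topspace (subtopology X H) \<and>
      subtopology X H closure_of (G \<inter> H) = topspace (subtopology X H))"
    using nd unfolding dense_in_def X_def H_def .
  ultimately have ne: "subtopology X H closure_of (G \<inter> H) \<noteq> H" by (metis ts)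
  have "subtopology X H closure_of (G \<inter> H) \<subseteq> H"
    using closure_of_subset_topspace[of "subtopology X H" "G \<inter> H"] ts by simp
  with ne obtain z where z: "z \<in> H" "z \<notin> subtopology X H closure_of (G \<inter> H)" by blast
  have zts: "z \<in> topspace (subtopology X H)" using z(1) ts by simp
  have "\<exists>T. z \<in> T \<and> openin (subtopology X H) T \<and> \<not> (\<exists>y. y \<in> G \<inter> H \<and> y \<in> T)"
    using z(2) zts unfolding in_closure_of by blast
  then obtain T where T: "z \<in> T" "openin (subtopology X H) T" "\<And>y. y \<in> G \<inter> H \<Longrightarrow> y \<notin> T"
    by blast
  obtain Ob where Ob: "openin X Ob" "T = Ob \<inter> H" using T(2) unfolding openin_subtopology by blast
  have "z \<in> Ob" using T(1) Ob(2) by blast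
  then obtain r where r: "r > 0" "\<And>v. (\<forall>j. \<bar>v j - z j\<bar> < r) \<Longrightarrow> Psi S v \<in> Ob"
    using box_radius[of S Ob z] Ob(1) unfolding X_def by blast
  have "Psi S v \<notin> G" if "\<forall>j. \<bar>v j - z j\<bar> < r" "v i = 0" for v
  proof
    assume "Psi S v \<in> G"
    moreover have "Psi S v \<in> H"
      using Psi_in_topspace[of S v] that(2) by (simp add: H_def K_hyperplane_def Psi_def psi_def)
    moreover have "Psi S v \<in> Ob" using r(2) that(1) by blast
    ultimately show False using T(3) Ob(2) by blast
  qed
  then show ?thesis using z(1) r(1) unfolding H_def by blast
qed

theorem theorem4p1:
  fixes S :: "('n::finite) set" and G :: "('n \<Rightarrow> real) set"
  assumes "CARD('n) \<ge> 2"
    and "K_subgroup S G"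
    and "dense_in (K_topology S) G"
    and "\<forall>i. \<not> dense_in (subtopology (K_topology S) (K_hyperplane S i)) (G \<inter> K_hyperplane S i)"
  shows "zero_dimensional (subtopology (K_topology S) G)"
proof -
  define X where "X = K_topology S"
  have Gsub: "G \<subseteq> topspace X" using assms(2) unfolding K_subgroup_def X_def by blast
  have Gadd: "\<And>p q. p \<in> G \<Longrightarrow> q \<in> G \<Longrightarrow> K_add S p q \<in> G"
    and Gneg: "\<And>p. p \<in> G \<Longrightarrow> K_neg S p \<in> G"
    using assms(2) unfolding K_subgroup_def by blast+
  have "\<forall>i. \<exists>z r. z \<in> K_hyperplane S i \<and> r > 0 \<and>
           (\<forall>v. (\<forall>j. \<bar>v j - z j\<bar> < r) \<and> v i = 0 \<longrightarrow> Psi S v \<notin> G)"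
  proof
    fix i show "\<exists>z r. z \<in> K_hyperplane S i \<and> r > 0 \<and>
           (\<forall>v. (\<forall>j. \<bar>v j - z j\<bar> < r) \<and> v i = 0 \<longrightarrow> Psi S v \<notin> G)"
      using assms(4) by (intro hyper_avoid[OF assms(2)]) simp
  qed
  then have "\<exists>z. \<forall>i. \<exists>r. z i \<in> K_hyperplane S i \<and> r > 0 \<and>
           (\<forall>v. (\<forall>j. \<bar>v j - z i j\<bar> < r) \<and> v i = 0 \<longrightarrow> Psi S v \<notin> G)"
    by (rule choice)
  then obtain z where "\<forall>i. \<exists>r. z i \<in> K_hyperplane S i \<and> r > 0 \<and>
           (\<forall>v. (\<forall>j. \<bar>v j - z i j\<bar> < r) \<and> v i = 0 \<longrightarrow> Psi S v \<notin> G)" by (rule exE)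
  then have "\<exists>r. \<forall>i. z i \<in> K_hyperplane S i \<and> r i > 0 \<and>
           (\<forall>v. (\<forall>j. \<bar>v j - z i j\<bar> < r i) \<and> v i = 0 \<longrightarrow> Psi S v \<notin> G)"
    by (rule choice)
  then obtain r where zr0: "\<forall>i. z i \<in> K_hyperplane S i \<and> r i > (0::real) \<and>
           (\<forall>v. (\<forall>j. \<bar>v j - z i j\<bar> < r i) \<and> v i = 0 \<longrightarrow> Psi S v \<notin> G)" by (rule exE)
  have zr: "\<And>i. z i \<in> K_hyperplane S i" "\<And>i. r i > (0::real)"
    "\<And>i v. (\<forall>j. \<bar>v j - z i j\<bar> < r i) \<Longrightarrow> v i = 0 \<Longrightarrow> Psi S v \<notin> G"
    using zr0 by blast+
  define r0 where "r0 = Min (range r)"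
  have r0: "r0 > 0" unfolding r0_def using zr(2) by simp
  have r0le: "r0 \<le> r i" for i unfolding r0_def by simp
  have zii: "z i i = 0" for i using zr(1)[of i] by (simp add: K_hyperplane_def)
  show ?thesis unfolding zero_dimensional_def
  proof (intro allI impI, elim conjE)
    fix U x assume U: "openin (subtopology (K_topology S) G) U" and xU: "x \<in> U"
    obtain Ob where Ob: "openin X Ob" "U = Ob \<inter> G" using U unfolding openin_subtopology X_def by blast
    have xOb: "x \<in> Ob" and xG: "x \<in> G" using xU Ob(2) by auto
    have xt: "x j \<in> topspace (factor_topology S j)" for j
      using Gsub xG unfolding X_def topspace_K by blast
    obtain \<rho> where \<rho>: "\<rho> > 0" "\<And>v. (\<forall>j. \<bar>v j - x j\<bar> < \<rho>) \<Longrightarrow> Psi S v \<in> Ob"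
      using box_radius[of S Ob x] Ob(1) xOb unfolding X_def by blast
    define d where "d = min (min \<rho> r0) 1 / 4"
    have d0: "d > 0" and drho: "d < \<rho>" and dr0: "d \<le> r0 / 4" and d1: "d \<le> 1/4"
      using \<rho>(1) r0 unfolding d_def by auto
    have "\<forall>i. \<exists>s. Psi S s \<in> G \<and> (\<forall>j. (if j = i then x i - d else x j - z i j - r0/2) < s j
            \<and> s j < (if j = i then x i - d/2 else x j - z i j + r0/2))"
    proof
      fix i show "\<exists>s. Psi S s \<in> G \<and> (\<forall>j. (if j = i then x i - d else x j - z i j - r0/2) < s j
            \<and> s j < (if j = i then x i - d/2 else x j - z i j + r0/2))"
        by (rule dense_pick[OF assms(3)]) (use d0 r0 in auto)
    qed
    then obtain sA where sA0: "\<forall>i. Psi S (sA i) \<in> G \<and> (\<forall>j. (if j = i then x i - d else x j - z i j - r0/2) < sA i j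
            \<and> sA i j < (if j = i then x i - d/2 else x j - z i j + r0/2))"
      by (rule choice[THEN exE])
    have sA: "\<And>i. Psi S (sA i) \<in> G"
      "\<And>i j. (if j = i then x i - d else x j - z i j - r0/2) < sA i j
            \<and> sA i j < (if j = i then x i - d/2 else x j - z i j + r0/2)"
      using sA0 by blast+
    have "\<forall>i. \<exists>s. Psi S s \<in> G \<and> (\<forall>j. (if j = i then x i + d/2 else x j - z i j - r0/2) < s j
            \<and> s j < (if j = i then x i + d else x j - z i j + r0/2))"
    proof
      fix i show "\<exists>s. Psi S s \<in> G \<and> (\<forall>j. (if j = i then x i + d/2 else x j - z i j - r0/2) < s j
            \<and> s j < (if j = i then x i + d else x j - z i j + r0/2))"
        by (rule dense_pick[OF assms(3)]) (use d0 r0 in auto)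
    qed
    then obtain sB where sB0: "\<forall>i. Psi S (sB i) \<in> G \<and> (\<forall>j. (if j = i then x i + d/2 else x j - z i j - r0/2) < sB i j
            \<and> sB i j < (if j = i then x i + d else x j - z i j + r0/2))"
      by (rule choice[THEN exE])
    have sB: "\<And>i. Psi S (sB i) \<in> G"
      "\<And>i j. (if j = i then x i + d/2 else x j - z i j - r0/2) < sB i j
            \<and> sB i j < (if j = i then x i + d else x j - z i j + r0/2)"
      using sB0 by blast+
    define a where "a i = sA i i" for i
    define b where "b i = sB i i" for i
    have ab: "x i - d < a i" "a i < x i" "x i < b i" "b i < x i + d" for i
      using sA(2)[of i i] sB(2)[of i i] d0 unfolding a_def b_def by auto
    define B where "B = PiE UNIV (\<lambda>j. psi S j ` {a j<..<b j})"
    define C where "C = PiE UNIV (\<lambda>j. psi S j ` {a j..b j})"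
    have face: False if s: "Psi S s \<in> G" "\<And>j. j \<noteq> i \<Longrightarrow> \<bar>s j - (x j - z i j)\<bar> < r0/2"
      and t: "\<And>j. a j \<le> t j \<and> t j \<le> b j" "Psi S t \<in> G" "s i = t i" for s t i
    proof -
      have "Psi S (t - s) \<in> G" using Gadd[OF t(2) Gneg[OF s(1)]] K_add_Psi[of S t s] by simp
      moreover have "\<bar>(t - s) j - z i j\<bar> < r i" for j
      proof (cases "j = i")
        case True then show ?thesis using zr(2)[of i] zii[of i] t(3) by simp
      next
        case False
        have h1: "\<bar>t j - x j\<bar> < d" using t(1)[of j] ab[of j] by auto
        have h2: "\<bar>s j - (x j - z i j)\<bar> < r0/2" using s(2)[OF False] .
        have "\<bar>(t j - s j) - z i j\<bar> < d + r0/2"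
          using h1[unfolded abs_less_iff] h2[unfolded abs_less_iff] unfolding abs_less_iff by linarith
        then have "\<bar>(t - s) j - z i j\<bar> < d + r0/2" by simp
        then show ?thesis using dr0 r0le[of i] r0 by linarith
      qed
      moreover have "(t - s) i = 0" using t(3) by simp
      ultimately show False using zr(3)[where i=i and v="t - s"] by blast
    qed
    have CG: "C \<inter> G = B \<inter> G"
    proof
      have sub: "psi S j ` {a j<..<b j} \<subseteq> psi S j ` {a j..b j}" for j by (rule image_mono) auto
      show "B \<inter> G \<subseteq> C \<inter> G" unfolding B_def C_def PiE_iff using sub by blast
    next
      show "C \<inter> G \<subseteq> B \<inter> G"
      proof
        fix y assume y: "y \<in> C \<inter> G"
        then have "\<forall>j. \<exists>u. a j \<le> u \<and> u \<le> b j \<and> y j = psi S j u" unfolding C_def by (force simp: PiE_iff)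
        then obtain t where t: "\<And>j. a j \<le> t j \<and> t j \<le> b j \<and> y j = psi S j (t j)" by metis
        have yt: "y = Psi S t" using t by (auto simp: Psi_def)
        have "a j < t j \<and> t j < b j" for j
        proof (rule ccontr)
          assume "\<not> (a j < t j \<and> t j < b j)"
          then have "t j = a j \<or> t j = b j" using t[of j] by auto
          then show False
          proof
            assume "t j = a j"
            show False
            proof (rule face[where s="sA j" and i=j and t=t])
              show "Psi S (sA j) \<in> G" by (rule sA(1))
              show "\<bar>sA j k - (x k - z j k)\<bar> < r0/2" if "k \<noteq> j" for k
                using sA(2)[where i=j and j=k] that unfolding abs_less_iff by auto
              show "a k \<le> t k \<and> t k \<le> b k" for k using t by blast
              show "Psi S t \<in> G" using y yt by blast
              show "sA j j = t j" using \<open>t j = a j\<close> a_def by simp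
            qed
          next
            assume "t j = b j"
            show False
            proof (rule face[where s="sB j" and i=j and t=t])
              show "Psi S (sB j) \<in> G" by (rule sB(1))
              show "\<bar>sB j k - (x k - z j k)\<bar> < r0/2" if "k \<noteq> j" for k
                using sB(2)[where i=j and j=k] that unfolding abs_less_iff by auto
              show "a k \<le> t k \<and> t k \<le> b k" for k using t by blast
              show "Psi S t \<in> G" using y yt by blast
              show "sB j j = t j" using \<open>t j = b j\<close> b_def by simp
            qed
          qed
        qed
        then have "y \<in> B" unfolding B_def using t by (auto simp: PiE_iff)
        then show "y \<in> B \<inter> G" using y by blast
      qed
    qed
    show "\<exists>V. openin (subtopology (K_topology S) G) V \<and> closedin (subtopology (K_topology S) G) V \<and> x \<in> V \<and> V \<subseteq> U"
    proof (intro exI conjI)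
      have "openin X B" unfolding B_def X_def K_topology_def
        by (simp add: openin_PiE openin_psi_interval)
      then show "openin (subtopology (K_topology S) G) (B \<inter> G)"
        unfolding openin_subtopology X_def by blast
      have "closedin X C" unfolding C_def X_def K_topology_def closedin_product_topology
      proof (rule disjI2, intro ballI)
        fix j :: 'n
        have "a j \<le> b j" "b j - a j < 1" using ab[of j] d1 by auto
        then show "closedin (factor_topology S j) (psi S j ` {a j..b j})" by (rule closedin_psi_interval)
      qed
      then show "closedin (subtopology (K_topology S) G) (B \<inter> G)"
        unfolding closedin_subtopology X_def using CG by blast
      have "x j \<in> psi S j ` {a j<..<b j}" for j
        using psi_id[OF xt[of j]] ab[of j] by (metis greaterThanLessThan_iff image_eqI)
      then show "x \<in> B \<inter> G" using xG unfolding B_def by (simp add: PiE_iff)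
      show "B \<inter> G \<subseteq> U"
      proof
        fix y assume y: "y \<in> B \<inter> G"
        then have "\<forall>j. \<exists>u. a j < u \<and> u < b j \<and> y j = psi S j u" unfolding B_def by (force simp: PiE_iff)
        then obtain t where t: "\<And>j. a j < t j \<and> t j < b j \<and> y j = psi S j (t j)" by metis
        have yt: "y = Psi S t" using t by (auto simp: Psi_def)
        have "\<bar>t j - x j\<bar> < \<rho>" for j using t[of j] ab[of j] drho by auto
        then have "y \<in> Ob" using \<rho>(2) yt by blast
        then show "y \<in> U" using y Ob(2) by blast
      qed
    qed
  qed
qed

end
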